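(* Let $\Lambda$ be a lattice of rank $s$ with basis $\mathcal V=(v_1,\ldots,v_s)$, and let $\bar a=(a_1,\ldots,a_t)\in(\mathcal F^0(\Lambda,\bar K))^t$. The bijection $\mathrm{Char}(\Lambda,\bar K^\times)\to(\bar K^\times)^s$, $g^\vee\mapsto(g^\vee(v_1),\ldots,g^\vee(v_s))$, restricts to a bijection from the set of $\bar a$-harmonic characters of $\Lambda$ onto $\Sigma_{\bar a,\mathcal V}$. Moreover, for every $\bar n=(n_1,\ldots,n_s)$ with all $n_i$ positive integers coprime to $p$, there are bijections $$\Sigma_{\bar a,\mathcal V}\cap\mu_{\bar n}\ \cong\ \{\bar a_*\text{-harmonic characters of }G_{\bar n,\mathcal V}\}\ \cong\ V(\bar a_* ),$$ and consequently $d(\bar a,\Lambda_{\bar n,\mathcal V})=\mathrm{card}\,V(\bar a_* )=\mathrm{card}\,(\Sigma_{\bar a,\mathcal V}\cap\mu_{\bar n})$.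
   Context: $K=\mathrm{GF}(p^r)$, $\bar K$ an algebraic closure. A lattice is a free abelian group of finite rank. For an abelian group $G$, $\mathcal F(G,\bar K)$ (resp. $\mathcal F^0(G,\bar K)$) is the space of all (resp. finitely supported) functions $G\to\bar K$; $(f*a)(g)=\sum_h f(h)a(g-h)$, $\Delta_af=f*a$. $\mathrm{Char}(\Lambda,\bar K^\times)$ is the set of homomorphisms $\Lambda\to\bar K^\times$; a function or character $f$ is $\bar a$-harmonic if $f*a_j=0$ for all $j$. The symbol of $a\in\mathcal F^0(\Lambda,\bar K)$ is the Laurent polynomial $\sigma_{a,\mathcal V}=\sum_{v=\sum_i\alpha_iv_i\in\Lambda}a(v)x_1^{-\alpha_1}\cdots x_s^{-\alpha_s}$, and $\Sigma_{\bar a,\mathcal V}=\{\xi\in(\bar K^\times)^s:\sigma_{a_j,\mathcal V}(\xi)=0,\ j=1,\ldots,t\}$. $\mu_{\bar n}=\{\xi\in(\bar K^\times)^s:\xi_i^{n_i}=1\ \forall i\}$. $\Lambda_{\bar n,\mathcal V}=\sum_i n_i\mathbb Z v_i$, $G_{\bar n,\mathcal V}=\Lambda/\Lambda_{\bar n,\mathcal V}$, $\pi:\Lambda\to G_{\bar n,\mathcal V}$ the projection, and $(a_j)_*\in\mathcal F(G_{\bar n,\mathcal V},\bar K)$, $(a_j)_*(c)=\sum_{v\in\pi^{-1}(c)}a_j(v)$; $\bar a_*=((a_1)_*,\ldots,(a_t)_* )$. For $G=G_{\bar n,\mathcal V}$, $G^\vee$ is the group of characters $G\to\bar K^\times$,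 $\hat b(g^\vee)=\sum_{g\in G}b(g)g^\vee(g)$, and $V(\bar a_* )=\{g^\vee\in G^\vee:\widehat{(a_j)_*}(g^\vee)=0\ \forall j\}$. For a finite-index sublattice $\Lambda'$, $d(\bar a,\Lambda')=\dim\bigcap_j\ker\big(\Delta_{a_j}|_{\mathcal F_{\Lambda'}(\Lambda,\bar K)}\big)$, where $\mathcal F_{\Lambda'}(\Lambda,\bar K)$ is the space of $\Lambda'$-periodic functions. *)

theory Defs
  imports "HOL-Computational_Algebra.Polynomial" "HOL-Library.Function_Algebras"
          "HOL-Library.FuncSet"
begin

text \<open>An algebraic closure of GF(p^r) is (up to isomorphism) exactly an algebraically closed
  field of characteristic p all of whose elements are algebraic over the prime field.\<close>
definition alg_closure_of_Fp :: "nat \<Rightarrow> 'k::field itself \<Rightarrow> bool" where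
  "alg_closure_of_Fp p _ \<longleftrightarrow>
     prime p \<and> CHAR('k) = p \<and>
     (\<forall>q::'k poly. degree q > 0 \<longrightarrow> (\<exists>x. poly q x = 0)) \<and>
     (\<forall>x::'k. \<exists>q::'k poly. q \<noteq> 0 \<and> (\<forall>i. coeff q i \<in> range of_nat) \<and> poly q x = 0)"

definition zsmul :: "int \<Rightarrow> 'a::ab_group_add \<Rightarrow> 'a" where
  "zsmul k x = (if 0 \<le> k then (\<Sum>_<nat k. x) else - (\<Sum>_<nat (-k). x))"

definition is_lattice_basis :: "nat \<Rightarrow> (nat \<Rightarrow> 'l::ab_group_add) \<Rightarrow> bool" where
  "is_lattice_basis s v \<longleftrightarrow>
     (\<forall>x. \<exists>!\<alpha>::nat \<Rightarrow> int. (\<forall>i\<ge>s. \<alpha> i = 0) \<and> x = (\<Sum>i<s. zsmul (\<alpha> i) (v i)))"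

definition coords :: "nat \<Rightarrow> (nat \<Rightarrow> 'l::ab_group_add) \<Rightarrow> 'l \<Rightarrow> nat \<Rightarrow> int" where
  "coords s v x = (THE \<alpha>. (\<forall>i\<ge>s. \<alpha> i = 0) \<and> x = (\<Sum>i<s. zsmul (\<alpha> i) (v i)))"

definition fin_supp :: "('l \<Rightarrow> 'k::zero) \<Rightarrow> bool" where
  "fin_supp a \<longleftrightarrow> finite {x. a x \<noteq> 0}"

definition conv :: "('l::ab_group_add \<Rightarrow> 'k::comm_ring) \<Rightarrow> ('l \<Rightarrow> 'k) \<Rightarrow> 'l \<Rightarrow> 'k" where
  "conv f a g = (\<Sum>h\<in>{h. a (g - h) \<noteq> 0}. f h * a (g - h))"

definition harmonic :: "('l::ab_group_add \<Rightarrow> 'k::comm_ring) list \<Rightarrow> ('l \<Rightarrow> 'k) \<Rightarrow> bool" where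
  "harmonic as f \<longleftrightarrow> (\<forall>a\<in>set as. conv f a = 0)"

definition is_char :: "('l::ab_group_add \<Rightarrow> 'k::field) \<Rightarrow> bool" where
  "is_char \<chi> \<longleftrightarrow> (\<forall>x y. \<chi> (x + y) = \<chi> x * \<chi> y) \<and> (\<forall>x. \<chi> x \<noteq> 0)"

text \<open>Points of \<open>(K\<^sup>\<times>)\<^sup>s\<close>, represented as functions on \<open>nat\<close> equal to 1 from index s on.\<close>
definition torus :: "nat \<Rightarrow> (nat \<Rightarrow> 'k::field) set" where
  "torus s = {\<xi>. (\<forall>i<s. \<xi> i \<noteq> 0) \<and> (\<forall>i\<ge>s. \<xi> i = 1)}"

definition char_to_torus :: "nat \<Rightarrow> (nat \<Rightarrow> 'l) \<Rightarrow> ('l \<Rightarrow> 'k::field) \<Rightarrow> nat \<Rightarrow> 'k" where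
  "char_to_torus s v \<chi> = (\<lambda>i. if i < s then \<chi> (v i) else 1)"

definition symbol_eval :: "nat \<Rightarrow> (nat \<Rightarrow> 'l::ab_group_add) \<Rightarrow> ('l \<Rightarrow> 'k::field) \<Rightarrow> (nat \<Rightarrow> 'k) \<Rightarrow> 'k" where
  "symbol_eval s v a \<xi> = (\<Sum>x\<in>{x. a x \<noteq> 0}. a x * (\<Prod>i<s. \<xi> i powi (- coords s v x i)))"

definition Sigma_set :: "nat \<Rightarrow> (nat \<Rightarrow> 'l::ab_group_add) \<Rightarrow> ('l \<Rightarrow> 'k::field) list \<Rightarrow> (nat \<Rightarrow> 'k) set" where
  "Sigma_set s v as = {\<xi> \<in> torus s. \<forall>a\<in>set as. symbol_eval s v a \<xi> = 0}"

definition mu_set :: "nat \<Rightarrow> (nat \<Rightarrow> nat) \<Rightarrow> (nat \<Rightarrow> 'k::field) set" where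
  "mu_set s n = {\<xi>. (\<forall>i<s. \<xi> i ^ n i = 1) \<and> (\<forall>i\<ge>s. \<xi> i = 1)}"

definition sublat :: "nat \<Rightarrow> (nat \<Rightarrow> 'l::ab_group_add) \<Rightarrow> (nat \<Rightarrow> nat) \<Rightarrow> 'l set" where
  "sublat s v n = {x. \<exists>k::nat \<Rightarrow> int. x = (\<Sum>i<s. zsmul (k i * int (n i)) (v i))}"

text \<open>Elements of \<open>G\<close> are the cosets \<open>x + \<Lambda>'\<close>.\<close>
definition coset :: "'l::ab_group_add set \<Rightarrow> 'l \<Rightarrow> 'l set" where
  "coset L x = {y. y - x \<in> L}"

definition quot :: "'l::ab_group_add set \<Rightarrow> 'l set set" where
  "quot L = range (coset L)"

definition proj :: "'l::ab_group_add set \<Rightarrow> 'l \<Rightarrow> 'l set" where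
  "proj L = coset L"

definition cadd :: "'l::ab_group_add set \<Rightarrow> 'l set \<Rightarrow> 'l set" where
  "cadd c d = {x + y | x y. x \<in> c \<and> y \<in> d}"

definition cdiff :: "'l::ab_group_add set \<Rightarrow> 'l set \<Rightarrow> 'l set" where
  "cdiff c d = {x - y | x y. x \<in> c \<and> y \<in> d}"

text \<open>Functions on G are modelled as extensional functions on the set of cosets.\<close>
definition pushfwd :: "'l::ab_group_add set \<Rightarrow> ('l \<Rightarrow> 'k::comm_ring) \<Rightarrow> 'l set \<Rightarrow> 'k" where
  "pushfwd L a = (\<lambda>c\<in>quot L. \<Sum>x\<in>{x\<in>c. a x \<noteq> 0}. a x)"

definition convG :: "'l::ab_group_add set \<Rightarrow> ('l set \<Rightarrow> 'k::comm_ring) \<Rightarrow> ('l set \<Rightarrow> 'k) \<Rightarrow> 'l set \<Rightarrow> 'k" where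
  "convG L f b = (\<lambda>c\<in>quot L. \<Sum>h\<in>quot L. f h * b (cdiff c h))"

definition is_charG :: "'l::ab_group_add set \<Rightarrow> ('l set \<Rightarrow> 'k::field) \<Rightarrow> bool" where
  "is_charG L \<psi> \<longleftrightarrow> \<psi> \<in> extensional (quot L) \<and>
     (\<forall>c\<in>quot L. \<forall>d\<in>quot L. \<psi> (cadd c d) = \<psi> c * \<psi> d) \<and> (\<forall>c\<in>quot L. \<psi> c \<noteq> 0)"

definition harmonic_charsG :: "'l::ab_group_add set \<Rightarrow> ('l set \<Rightarrow> 'k::field) list \<Rightarrow> ('l set \<Rightarrow> 'k) set" where
  "harmonic_charsG L bs = {\<psi>. is_charG L \<psi> \<and> (\<forall>b\<in>set bs. \<forall>c\<in>quot L. convG L \<psi> b c = 0)}"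

definition fourierG :: "'l::ab_group_add set \<Rightarrow> ('l set \<Rightarrow> 'k::comm_ring) \<Rightarrow> ('l set \<Rightarrow> 'k) \<Rightarrow> 'k" where
  "fourierG L b \<psi> = (\<Sum>g\<in>quot L. b g * \<psi> g)"

definition V_set :: "'l::ab_group_add set \<Rightarrow> ('l set \<Rightarrow> 'k::field) list \<Rightarrow> ('l set \<Rightarrow> 'k) set" where
  "V_set L bs = {\<psi>. is_charG L \<psi> \<and> (\<forall>b\<in>set bs. fourierG L b \<psi> = 0)}"

definition periodic :: "'l::ab_group_add set \<Rightarrow> ('l \<Rightarrow> 'k) \<Rightarrow> bool" where
  "periodic L f \<longleftrightarrow> (\<forall>x y. y \<in> L \<longrightarrow> f (x + y) = f x)"

definition d_dim :: "('l::ab_group_add \<Rightarrow> 'k::field) list \<Rightarrow> 'l set \<Rightarrow> nat" where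
  "d_dim as L = vector_space.dim (\<lambda>(c::'k) (f::'l \<Rightarrow> 'k). (\<lambda>x. c * f x))
                  {f. periodic L f \<and> (\<forall>a\<in>set as. conv f a = 0)}"

end

theory Submission
  imports Defs
begin

lemma zsmul_0 [simp]: "zsmul 0 x = 0" by (simp add: zsmul_def)
lemma zsmul_1 [simp]: "zsmul 1 x = x" by (simp add: zsmul_def)

lemma zsmul_plus1: "zsmul (k + 1) x = zsmul k x + x"
proof (cases "k \<ge> 0")
  case True
  then have "nat (k+1) = Suc (nat k)" by simp
  then show ?thesis using True by (simp add: zsmul_def)
next
  case False
  show ?thesis
  proof (cases "k = -1")
    case True then show ?thesis by (simp add: zsmul_def)
  next
    case False2: False
    with False have "nat (-k) = Suc (nat (-(k+1)))" by simp
    then show ?thesis using False False2 by (simp add: zsmul_def)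
  qed
qed

lemma zsmul_add: "zsmul (a + b) x = zsmul a x + zsmul b x"
proof (induction b rule: int_induct[where k=0])
  case base then show ?case by simp
next
  case (step1 i)
  have "zsmul (a + (i+1)) x = zsmul (a + i + 1) x" by (simp add: add.assoc)
  also have "\<dots> = zsmul (a+i) x + x" by (rule zsmul_plus1)
  finally show ?case using step1 zsmul_plus1[of i x] by (simp add: algebra_simps)
next
  case (step2 i)
  have e1: "zsmul (a + (i - 1) + 1) x = zsmul (a + (i-1)) x + x" by (rule zsmul_plus1)
  have e2: "zsmul (i - 1 + 1) x = zsmul (i-1) x + x" by (rule zsmul_plus1)
  from e1 e2 step2 show ?case by (simp add: algebra_simps)
qed

lemma zsmul_neg: "zsmul (-a) x = - zsmul a x"
  using zsmul_add[of a "-a" x] by (simp add: eq_neg_iff_add_eq_0 add.commute)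

lemma zsmul_diff: "zsmul (a - b) x = zsmul a x - zsmul b x"
  using zsmul_add[of a "-b" x] zsmul_neg[of b x] by simp

lemma char_0: "is_char \<chi> \<Longrightarrow> \<chi> 0 = 1"
  unfolding is_char_def by (metis add_0 mult_cancel_right2)

lemma char_neg: "is_char \<chi> \<Longrightarrow> \<chi> (- x) = inverse (\<chi> x)"
  using char_0[of \<chi>] unfolding is_char_def
  by (metis add.right_inverse field_class.field_inverse mult.commute inverse_unique)

lemma char_diff: "is_char \<chi> \<Longrightarrow> \<chi> (x - y) = \<chi> x * inverse (\<chi> y)"
  using char_neg[of \<chi> y] unfolding is_char_def by (metis diff_conv_add_uminus)

lemma char_nz: "is_char \<chi> \<Longrightarrow> \<chi> x \<noteq> 0" unfolding is_char_def by blast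

lemma char_add: "is_char \<chi> \<Longrightarrow> \<chi> (x + y) = \<chi> x * \<chi> y" unfolding is_char_def by blast

lemma char_sum: "is_char \<chi> \<Longrightarrow> \<chi> (sum f A) = (\<Prod>i\<in>A. \<chi> (f i))"
  by (induction A rule: infinite_finite_induct) (auto simp: char_0 char_add)

lemma char_zsmul: assumes c: "is_char \<chi>" shows "\<chi> (zsmul k x) = \<chi> x powi k"
proof (induction k rule: int_induct[where k=0])
  case base then show ?case by (simp add: char_0[OF c])
next
  case (step1 i)
  then show ?case using char_nz[OF c, of x]
    by (simp add: zsmul_plus1 char_add[OF c] power_int_add_1)
next
  case (step2 i)
  have "\<chi> (zsmul i x) = \<chi> (zsmul (i - 1) x) * \<chi> x"
    using zsmul_plus1[of "i-1" x] char_add[OF c] by simp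
  then show ?case using step2 char_nz[OF c, of x]
    by (simp add: power_int_diff field_simps)
qed




lemma roots_card:
  fixes q :: "'k::field poly"
  assumes ac: "\<forall>q::'k poly. degree q > 0 \<longrightarrow> (\<exists>x. poly q x = 0)"
  shows "q \<noteq> 0 \<Longrightarrow> (\<forall>x. \<not> [:-x,1:]^2 dvd q) \<Longrightarrow> card {x. poly q x = 0} = degree q"
proof (induction "degree q" arbitrary: q)
  case 0
  then obtain c where "q = [:c:]" using degree_eq_zeroE by metis
  with 0 have "{x. poly q x = 0} = {}" by auto
  then show ?case using 0 by simp
next
  case (Suc d)
  then obtain x where x: "poly q x = 0" using ac by (metis zero_less_Suc)
  then obtain r where r: "q = [:-x,1:] * r" using poly_eq_0_iff_dvd by (metis dvdE)
  have r0: "r \<noteq> 0" using r Suc by auto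
  have dq: "degree q = degree r + 1" using r r0 degree_mult_eq[of "[:-x,1:]" r] by simp
  have rx: "poly r x \<noteq> 0"
  proof
    assume "poly r x = 0"
    then obtain t where "r = [:-x,1:] * t" using poly_eq_0_iff_dvd by (metis dvdE)
    then have "q = [:-x,1:]^2 * t" using r by (simp only: power2_eq_square mult.assoc)
    then have "[:-x,1:]^2 dvd q" by (rule dvdI)
    with Suc show False by blast
  qed
  have sq: "\<forall>y. \<not> [:-y,1:]^2 dvd r"
    using Suc(4) r by (meson dvd_mult2 dvd_trans dvd_triv_right)
  have "{y. poly q y = 0} = insert x {y. poly r y = 0}" using r x by auto
  moreover have "finite {y. poly r y = 0}" using r0 by (rule poly_roots_finite)
  ultimately have "card {y. poly q y = 0} = card {y. poly r y = 0} + 1" using rx by simp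
  also have "card {y. poly r y = 0} = degree r" using Suc(1)[of r] dq Suc(2) r0 sq by simp
  finally show ?case using dq by simp
qed

lemma unity_card:
  assumes ac: "\<forall>q::'k::field poly. degree q > 0 \<longrightarrow> (\<exists>x. poly q x = 0)"
    and m: "0 < m" and mk: "of_nat m \<noteq> (0::'k)"
  shows "card {z::'k. z ^ m = 1} = m"
proof -
  define q :: "'k poly" where "q = monom 1 m + [:-1:]"
  have pq: "poly q z = z ^ m - 1" for z by (simp add: q_def poly_monom)
  have dq: "degree q = m" unfolding q_def using m by (subst degree_add_eq_left) (auto simp: degree_monom_eq)
  have q0: "q \<noteq> 0" using dq m by auto
  have sq: "\<forall>x. \<not> [:-x,1:]^2 dvd q"
  proof (intro allI notI)
    fix x assume "[:-x,1:]^2 dvd q"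
    then obtain r where r: "q = [:-x,1:]^2 * r" by (rule dvdE)
    have "poly q x = 0" using r by simp
    then have x1: "x ^ m = 1" using pq by simp
    then have x0: "x \<noteq> 0" using m by (metis power_0_left zero_neq_one less_not_refl)
    have "pderiv q = [:-x,1:]^2 * pderiv r + r * (smult (of_nat 2) [:-x,1:] * pderiv [:-x,1:])"
      unfolding r pderiv_mult using pderiv_power_Suc[of "[:-x,1:]" 1] by (simp add: numeral_2_eq_2)
    then have "poly (pderiv q) x = 0" by simp
    moreover have "pderiv q = monom (of_nat m) (m - 1)"
      by (simp add: q_def pderiv_add pderiv_monom pderiv_pCons)
    ultimately have "of_nat m * x ^ (m - 1) = 0" by (simp add: poly_monom)
    then show False using mk x0 by simp
  qed
  have "{z. z ^ m = 1} = {z. poly q z = 0}" using pq by auto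
  then show ?thesis using roots_card[OF ac q0 sq] dq by simp
qed


lemma sum_fun_apply: "(\<Sum>v\<in>S. f v) x = (\<Sum>v\<in>S. f v x)"
  by (induction S rule: infinite_finite_induct) auto

lemma fv: "vector_space (\<lambda>(c::'k::field) (f::'a \<Rightarrow> 'k) x. c * f x)"
  by unfold_locales (auto simp: fun_eq_iff algebra_simps)

lemma dedekind:
  fixes S :: "('l::ab_group_add \<Rightarrow> 'k::field) set"
  assumes "finite S"
  shows "S \<subseteq> {\<chi>. is_char \<chi>} \<Longrightarrow> (\<forall>x. (\<Sum>\<chi>\<in>S. u \<chi> * \<chi> x) = 0) \<Longrightarrow> \<forall>\<chi>\<in>S. u \<chi> = 0"
  using assms
proof (induction S arbitrary: u rule: finite_induct)
  case empty then show ?case by simp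
next
  case (insert \<chi>0 S)
  have c0: "is_char \<chi>0" using insert by auto
  have cS: "S \<subseteq> {\<chi>. is_char \<chi>}" using insert by auto
  have h: "u \<chi>0 * \<chi>0 x + (\<Sum>\<chi>\<in>S. u \<chi> * \<chi> x) = 0" for x
    using insert(5) insert(1,2) by simp
  have z: "u \<chi> * (\<chi> y - \<chi>0 y) = 0" if "\<chi> \<in> S" for \<chi> y
  proof -
    have "\<forall>x. (\<Sum>\<chi>\<in>S. (u \<chi> * (\<chi> y - \<chi>0 y)) * \<chi> x) = 0"
    proof
      fix x
      have e1: "(\<Sum>\<chi>\<in>S. u \<chi> * \<chi> (x + y)) = (\<Sum>\<chi>\<in>S. u \<chi> * \<chi> x * \<chi> y)"
        using cS by (intro sum.cong refl) (auto simp: char_add)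
      have "(\<Sum>\<chi>\<in>S. (u \<chi> * (\<chi> y - \<chi>0 y)) * \<chi> x)
          = (\<Sum>\<chi>\<in>S. u \<chi> * \<chi> x * \<chi> y) - \<chi>0 y * (\<Sum>\<chi>\<in>S. u \<chi> * \<chi> x)"
        by (simp add: sum_subtractf sum_distrib_left algebra_simps)
      also have "\<dots> = - (u \<chi>0 * \<chi>0 (x + y)) - \<chi>0 y * (- (u \<chi>0 * \<chi>0 x))"
      proof -
        have A: "(\<Sum>\<chi>\<in>S. u \<chi> * \<chi> (x + y)) = - (u \<chi>0 * \<chi>0 (x + y))"
          using h[of "x+y"] by (metis add.commute eq_neg_iff_add_eq_0)
        have B: "(\<Sum>\<chi>\<in>S. u \<chi> * \<chi> x) = - (u \<chi>0 * \<chi>0 x)"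
          using h[of x] by (metis add.commute eq_neg_iff_add_eq_0)
        show ?thesis using A B e1 by simp
      qed
      also have "\<dots> = 0" by (simp add: char_add[OF c0] algebra_simps)
      finally show "(\<Sum>\<chi>\<in>S. (u \<chi> * (\<chi> y - \<chi>0 y)) * \<chi> x) = 0" .
    qed
    then show ?thesis using insert.IH[OF cS, of "\<lambda>\<chi>. u \<chi> * (\<chi> y - \<chi>0 y)"] that by blast
  qed
  have uS: "\<forall>\<chi>\<in>S. u \<chi> = 0"
  proof
    fix \<chi> assume "\<chi> \<in> S"
    then have "\<chi> \<noteq> \<chi>0" using insert(2) by blast
    then obtain y where "\<chi> y \<noteq> \<chi>0 y" by blast
    then show "u \<chi> = 0" using z[OF \<open>\<chi> \<in> S\<close>, of y] by simp
  qed
  then have "u \<chi>0 * \<chi>0 0 = 0" using h[of 0] by simp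
  then have "u \<chi>0 = 0" using char_0[OF c0] by simp
  with uS show ?case by simp
qed

lemma chars_indep:
  "\<not> module.dependent (\<lambda>(c::'k::field) (f::'l::ab_group_add \<Rightarrow> 'k) x. c * f x) {\<chi>. is_char \<chi>}"
proof -
  interpret FV: vector_space "\<lambda>(c::'k::field) (f::'l::ab_group_add \<Rightarrow> 'k) x. c * f x" by (rule fv)
  show ?thesis unfolding FV.independent_explicit_finite_subsets
  proof (intro allI impI ballI)
    fix S :: "('l \<Rightarrow> 'k) set" and u \<chi>
    assume "S \<subseteq> {\<chi>. is_char \<chi>}" "finite S" "(\<Sum>v\<in>S. (\<lambda>x. u v * v x)) = 0" "\<chi> \<in> S"
    then show "u \<chi> = 0" using dedekind[of S u] by (simp add: fun_eq_iff sum_fun_apply)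
  qed
qed

lemma conv_lin: "conv (\<lambda>x. \<Sum>\<chi>\<in>P. u \<chi> * \<chi> x) a g = (\<Sum>\<chi>\<in>P. u \<chi> * conv \<chi> a g)"
  unfolding conv_def by (simp add: sum_distrib_right sum_distrib_left mult.assoc sum.swap[of _ P])


lemma card_mu:
  assumes "\<forall>i<s. card {z::'k::field. z ^ n i = 1} = n i"
  shows "card (mu_set s n :: (nat \<Rightarrow> 'k) set) = (\<Prod>i<s. n i)"
proof -
  have "bij_betw (\<lambda>\<xi>. restrict \<xi> {..<s}) (mu_set s n :: (nat \<Rightarrow> 'k) set) (PiE {..<s} (\<lambda>i. {z::'k. z ^ n i = 1}))"
    by (rule bij_betw_byWitness[where f'="\<lambda>\<eta> i. if i < s then \<eta> i else 1"])
       (auto simp: mu_set_def fun_eq_iff PiE_def extensional_def)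
  then have "card (mu_set s n :: (nat \<Rightarrow> 'k) set) = card (PiE {..<s} (\<lambda>i. {z::'k. z ^ n i = 1}))"
    by (rule bij_betw_same_card)
  also have "\<dots> = (\<Prod>i<s. n i)" using assms by (simp add: card_PiE)
  finally show ?thesis .
qed

definition subgrp :: "'l::ab_group_add set \<Rightarrow> bool" where
  "subgrp L \<longleftrightarrow> 0 \<in> L \<and> (\<forall>x\<in>L. \<forall>y\<in>L. x - y \<in> L)"

context fixes L :: "'l::ab_group_add set" assumes sg: "subgrp L"
begin

lemma sg0: "0 \<in> L" using sg by (simp add: subgrp_def)
lemma sgdiff: "x \<in> L \<Longrightarrow> y \<in> L \<Longrightarrow> x - y \<in> L" using sg by (simp add: subgrp_def)
lemma sgneg: "x \<in> L \<Longrightarrow> - x \<in> L" using sgdiff[OF sg0, of x] by simp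
lemma sgadd: "x \<in> L \<Longrightarrow> y \<in> L \<Longrightarrow> x + y \<in> L" using sgdiff[of x "- y"] sgneg[of y] by simp

lemma mem_coset: "y \<in> coset L x \<longleftrightarrow> y - x \<in> L" by (simp add: coset_def)
lemma mem_coset_self: "x \<in> coset L x" using sg0 by (simp add: coset_def)

lemma coset_eq: "coset L x = coset L y \<longleftrightarrow> x - y \<in> L"
proof
  assume "coset L x = coset L y"
  then show "x - y \<in> L" using mem_coset_self[of x] by (simp add: mem_coset)
next
  assume h: "x - y \<in> L"
  show "coset L x = coset L y"
  proof (rule set_eqI)
    fix z
    have "z - y = (z - x) + (x - y)" "z - x = (z - y) - (x - y)" by simp_all
    then show "z \<in> coset L x \<longleftrightarrow> z \<in> coset L y" using h sgadd sgdiff by (metis mem_coset)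
  qed
qed

lemma coset_mem_eq: "y \<in> coset L x \<Longrightarrow> coset L y = coset L x"
  by (simp add: coset_eq mem_coset)

lemma cadd_coset: "cadd (coset L x) (coset L y) = coset L (x + y)"
proof (rule set_eqI)
  fix z
  show "z \<in> cadd (coset L x) (coset L y) \<longleftrightarrow> z \<in> coset L (x + y)"
  proof
    assume "z \<in> cadd (coset L x) (coset L y)"
    then obtain a b where "z = a + b" "a - x \<in> L" "b - y \<in> L" by (auto simp: cadd_def mem_coset)
    moreover have "a + b - (x + y) = (a - x) + (b - y)" by simp
    ultimately show "z \<in> coset L (x + y)" using sgadd by (metis mem_coset)
  next
    assume "z \<in> coset L (x + y)"
    then have "z - y \<in> coset L x" by (simp add: mem_coset algebra_simps)
    moreover have "z = (z - y) + y" by simp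
    ultimately show "z \<in> cadd (coset L x) (coset L y)"
      unfolding cadd_def using mem_coset_self[of y] by blast
  qed
qed

lemma cdiff_coset: "cdiff (coset L x) (coset L y) = coset L (x - y)"
proof (rule set_eqI)
  fix z
  show "z \<in> cdiff (coset L x) (coset L y) \<longleftrightarrow> z \<in> coset L (x - y)"
  proof
    assume "z \<in> cdiff (coset L x) (coset L y)"
    then obtain a b where "z = a - b" "a - x \<in> L" "b - y \<in> L" by (auto simp: cdiff_def mem_coset)
    moreover have "a - b - (x - y) = (a - x) - (b - y)" by simp
    ultimately show "z \<in> coset L (x - y)" using sgdiff by (metis mem_coset)
  next
    assume "z \<in> coset L (x - y)"
    then have "z + y \<in> coset L x" by (simp add: mem_coset algebra_simps)
    moreover have "z = (z + y) - y" by simp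
    ultimately show "z \<in> cdiff (coset L x) (coset L y)"
      unfolding cdiff_def using mem_coset_self[of y] by blast
  qed
qed

end

lemma subgrp_sublat: "subgrp (sublat s v n)"
  unfolding subgrp_def sublat_def
proof (intro conjI ballI)
  show "0 \<in> {x. \<exists>k. x = (\<Sum>i<s. zsmul (k i * int (n i)) (v i))}"
    by (intro CollectI exI[of _ "\<lambda>_. 0"]) simp
  fix x y assume "x \<in> {x. \<exists>k. x = (\<Sum>i<s. zsmul (k i * int (n i)) (v i))}"
    "y \<in> {x. \<exists>k. x = (\<Sum>i<s. zsmul (k i * int (n i)) (v i))}"
  then obtain k k' where "x = (\<Sum>i<s. zsmul (k i * int (n i)) (v i))" "y = (\<Sum>i<s. zsmul (k' i * int (n i)) (v i))"
    by blast
  then have "x - y = (\<Sum>i<s. zsmul ((k i - k' i) * int (n i)) (v i))"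
    by (simp add: sum_subtractf[symmetric] zsmul_diff[symmetric] left_diff_distrib)
  then show "x - y \<in> {x. \<exists>k. x = (\<Sum>i<s. zsmul (k i * int (n i)) (v i))}"
    by (auto intro!: exI[where x="\<lambda>i. k i - k' i"])
qed

lemma conv_reindex:
  fixes f a :: "'l::ab_group_add \<Rightarrow> 'k::comm_ring"
  shows "conv f a g = (\<Sum>y\<in>{y. a y \<noteq> 0}. f (g - y) * a y)"
  unfolding conv_def
  by (rule sum.reindex_bij_witness[where i="\<lambda>y. g - y" and j="\<lambda>h. g - h"]) auto


lemma conv_pushfwd:
  fixes F :: "'l::ab_group_add set \<Rightarrow> 'k::comm_ring"
  assumes sg: "subgrp L" and fq: "finite (quot L)" and fa: "fin_supp a"
  shows "conv (\<lambda>x. F (coset L x)) a g = convG L F (pushfwd L a) (coset L g)"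
proof -
  let ?S = "{y. a y \<noteq> 0}"
  let ?c = "cdiff (coset L g)"
  have fS: "finite ?S" using fa by (simp add: fin_supp_def)
  have cq: "\<And>d. d \<in> quot L \<Longrightarrow> ?c d \<in> quot L \<and> ?c (?c d) = d"
    by (auto simp: quot_def cdiff_coset[OF sg])
  have gq: "coset L g \<in> quot L" by (simp add: quot_def)
  have "convG L F (pushfwd L a) (coset L g) = (\<Sum>c\<in>quot L. F c * pushfwd L a (?c c))"
    using gq by (simp add: convG_def)
  also have "\<dots> = (\<Sum>d\<in>quot L. F (?c d) * pushfwd L a d)"
    by (rule sum.reindex_bij_witness[where i="?c" and j="?c"]) (use cq in auto)
  also have "\<dots> = (\<Sum>d\<in>quot L. \<Sum>y\<in>{y. y \<in> ?S \<and> coset L y = d}. F (coset L (g - y)) * a y)"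
  proof (intro sum.cong refl)
    fix d assume d: "d \<in> quot L"
    then obtain z where z: "d = coset L z" by (auto simp: quot_def)
    have e: "{x\<in>d. a x \<noteq> 0} = {y. y \<in> ?S \<and> coset L y = d}"
      using coset_mem_eq[OF sg] mem_coset_self[OF sg] z by blast
    have "F (?c d) * pushfwd L a d = (\<Sum>y\<in>{y. y \<in> ?S \<and> coset L y = d}. F (?c d) * a y)"
      using d by (simp add: pushfwd_def e sum_distrib_left)
    also have "\<dots> = (\<Sum>y\<in>{y. y \<in> ?S \<and> coset L y = d}. F (coset L (g - y)) * a y)"
      by (intro sum.cong refl) (auto simp: cdiff_coset[OF sg])
    finally show "F (?c d) * pushfwd L a d = (\<Sum>y\<in>{y. y \<in> ?S \<and> coset L y = d}. F (coset L (g - y)) * a y)" .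
  qed
  also have "\<dots> = (\<Sum>y\<in>?S. F (coset L (g - y)) * a y)"
    by (rule sum.group[OF fS fq]) (auto simp: quot_def)
  also have "\<dots> = conv (\<lambda>x. F (coset L x)) a g" by (simp add: conv_reindex)
  finally show ?thesis by simp
qed


definition invG :: "'l::ab_group_add set \<Rightarrow> ('l set \<Rightarrow> 'k::field) \<Rightarrow> 'l set \<Rightarrow> 'k" where
  "invG L \<psi> = (\<lambda>c\<in>quot L. inverse (\<psi> c))"

context fixes L :: "'l::ab_group_add set" assumes sg: "subgrp L"
begin

lemma cadd_quot: "c \<in> quot L \<Longrightarrow> d \<in> quot L \<Longrightarrow> cadd c d \<in> quot L"
  by (auto simp: quot_def cadd_coset[OF sg])

lemma charG_inv: "is_charG L \<psi> \<Longrightarrow> is_charG L (invG L \<psi>)"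
  by (auto simp: is_charG_def invG_def cadd_quot)

lemma invG_invG: "\<psi> \<in> extensional (quot L) \<Longrightarrow> invG L (invG L \<psi>) = \<psi>"
  by (rule extensionalityI[of _ "quot L"]) (auto simp: invG_def)

lemma convG_charG:
  assumes c: "is_charG L \<psi>" and cq: "c \<in> quot L"
  shows "convG L \<psi> b c = \<psi> c * fourierG L b (invG L \<psi>)"
proof -
  have cq2: "\<And>d. d \<in> quot L \<Longrightarrow> cdiff c d \<in> quot L \<and> cdiff c (cdiff c d) = d"
    using cq by (auto simp: quot_def cdiff_coset[OF sg])
  have ps: "\<psi> (cdiff c g) = \<psi> c * inverse (\<psi> g)" if g: "g \<in> quot L" for g
  proof -
    obtain x y where xy: "c = coset L x" "g = coset L y" using cq g by (auto simp: quot_def)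
    have "\<psi> c = \<psi> (cadd (cdiff c g) g)" using xy by (simp add: cdiff_coset[OF sg] cadd_coset[OF sg])
    also have "\<dots> = \<psi> (cdiff c g) * \<psi> g" using c cq2[OF g] g by (simp add: is_charG_def)
    finally show ?thesis using c g by (simp add: is_charG_def field_simps)
  qed
  have "convG L \<psi> b c = (\<Sum>h\<in>quot L. \<psi> h * b (cdiff c h))" using cq by (simp add: convG_def)
  also have "\<dots> = (\<Sum>g\<in>quot L. \<psi> (cdiff c g) * b g)"
    by (rule sum.reindex_bij_witness[where i="cdiff c" and j="cdiff c"]) (use cq2 in auto)
  also have "\<dots> = (\<Sum>g\<in>quot L. \<psi> c * (b g * invG L \<psi> g))"
    by (intro sum.cong refl) (simp add: ps invG_def)
  also have "\<dots> = \<psi> c * fourierG L b (invG L \<psi>)" by (simp add: fourierG_def sum_distrib_left)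
  finally show ?thesis .
qed

lemma harmG_iff:
  "\<psi> \<in> harmonic_charsG L bs \<longleftrightarrow> invG L \<psi> \<in> V_set L bs \<and> \<psi> \<in> extensional (quot L)"
proof
  assume h: "\<psi> \<in> harmonic_charsG L bs"
  then have c: "is_charG L \<psi>" by (simp add: harmonic_charsG_def)
  have q0: "coset L 0 \<in> quot L" by (simp add: quot_def)
  have "fourierG L b (invG L \<psi>) = 0" if "b \<in> set bs" for b
    using h that convG_charG[OF c q0, of b] c q0 by (auto simp: harmonic_charsG_def is_charG_def)
  then show "invG L \<psi> \<in> V_set L bs \<and> \<psi> \<in> extensional (quot L)"
    using charG_inv[OF c] c by (simp add: V_set_def is_charG_def)
next
  assume h: "invG L \<psi> \<in> V_set L bs \<and> \<psi> \<in> extensional (quot L)"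
  then have "is_charG L (invG L (invG L \<psi>))" by (simp add: V_set_def charG_inv)
  then have c: "is_charG L \<psi>" using h invG_invG by metis
  show "\<psi> \<in> harmonic_charsG L bs"
    using h c convG_charG[OF c] by (simp add: harmonic_charsG_def V_set_def)
qed

lemma bij_HG_V: "bij_betw (invG L) (harmonic_charsG L bs) (V_set L bs)"
proof (rule bij_betw_byWitness[where f'="invG L"])
  have ext: "\<And>\<phi>. \<phi> \<in> V_set L bs \<Longrightarrow> \<phi> \<in> extensional (quot L)"
    by (simp add: V_set_def is_charG_def)
  show "\<forall>a\<in>harmonic_charsG L bs. invG L (invG L a) = a" using harmG_iff invG_invG by blast
  show "\<forall>a'\<in>V_set L bs. invG L (invG L a') = a'" using ext invG_invG by blast
  show "invG L ` harmonic_charsG L bs \<subseteq> V_set L bs" using harmG_iff by blast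
  show "invG L ` V_set L bs \<subseteq> harmonic_charsG L bs"
  proof
    fix \<psi> assume "\<psi> \<in> invG L ` V_set L bs"
    then obtain \<phi> where "\<phi> \<in> V_set L bs" "\<psi> = invG L \<phi>" by blast
    moreover have "\<psi> \<in> extensional (quot L)" using \<open>\<psi> = invG L \<phi>\<close> by (simp add: invG_def)
    ultimately show "\<psi> \<in> harmonic_charsG L bs"
      using harmG_iff[of \<psi>] ext invG_invG by metis
  qed
qed

end

definition chi_of :: "nat \<Rightarrow> (nat \<Rightarrow> 'l::ab_group_add) \<Rightarrow> (nat \<Rightarrow> 'k::field) \<Rightarrow> 'l \<Rightarrow> 'k" where
  "chi_of s v \<xi> x = (\<Prod>i<s. \<xi> i powi coords s v x i)"

context
  fixes s :: nat and v :: "nat \<Rightarrow> 'l::ab_group_add"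
  assumes basis: "is_lattice_basis s v"
begin

lemma coords_spec: "(\<forall>i\<ge>s. coords s v x i = 0) \<and> x = (\<Sum>i<s. zsmul (coords s v x i) (v i))"
proof -
  have "\<exists>!\<alpha>::nat \<Rightarrow> int. (\<forall>i\<ge>s. \<alpha> i = 0) \<and> x = (\<Sum>i<s. zsmul (\<alpha> i) (v i))"
    using basis unfolding is_lattice_basis_def by blast
  from theI'[OF this] show ?thesis unfolding coords_def .
qed

lemma coords_unique:
  assumes "\<forall>i\<ge>s. \<alpha> i = 0" "x = (\<Sum>i<s. zsmul (\<alpha> i) (v i))"
  shows "coords s v x = \<alpha>"
  using basis assms coords_spec[of x] unfolding is_lattice_basis_def by blast

lemma coords_add: "coords s v (x + y) = (\<lambda>i. coords s v x i + coords s v y i)"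
  apply (rule coords_unique)
  using coords_spec[of x] coords_spec[of y]
  by (auto simp: zsmul_add sum.distrib)

lemma coords_neg: "coords s v (- x) = (\<lambda>i. - coords s v x i)"
  apply (rule coords_unique)
  using coords_spec[of x]
  by (auto simp: zsmul_neg sum_negf)

lemma coords_v: assumes "i < s" shows "coords s v (v i) = (\<lambda>j. if j = i then 1 else 0)"
  apply (rule coords_unique)
  using assms by (auto simp: if_distrib[of "\<lambda>k. zsmul k _"] cong: if_cong)

lemma char_expand: "is_char \<chi> \<Longrightarrow> \<chi> x = (\<Prod>i<s. \<chi> (v i) powi coords s v x i)"
proof -
  assume c: "is_char \<chi>"
  have "\<chi> x = \<chi> (\<Sum>i<s. zsmul (coords s v x i) (v i))" using coords_spec[of x] by simp
  also have "\<dots> = (\<Prod>i<s. \<chi> (v i) powi coords s v x i)"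
    by (simp add: char_sum[OF c] char_zsmul[OF c])
  finally show ?thesis .
qed

lemma chi_of_char: assumes "\<xi> \<in> torus s" shows "is_char (chi_of s v \<xi>)"
  using assms unfolding is_char_def chi_of_def torus_def
  by (auto simp: coords_add power_int_add prod.distrib)

lemma ctt_chi_of: assumes "\<xi> \<in> torus s" shows "char_to_torus s v (chi_of s v \<xi>) = \<xi>"
proof
  fix i show "char_to_torus s v (chi_of s v \<xi>) i = \<xi> i"
  proof (cases "i < s")
    case True
    have "chi_of s v \<xi> (v i) = (\<Prod>j<s. if j = i then \<xi> j else 1)"
      unfolding chi_of_def coords_v[OF True] by (intro prod.cong) auto
    also have "\<dots> = \<xi> i" using True by (simp add: prod.delta)
    finally show ?thesis using True by (simp add: char_to_torus_def)
  next
    case False then show ?thesis using assms by (simp add: char_to_torus_def torus_def)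
  qed
qed

lemma ctt_torus: "is_char \<chi> \<Longrightarrow> char_to_torus s v \<chi> \<in> torus s"
  by (auto simp: torus_def char_to_torus_def char_nz)

lemma chi_of_ctt: "is_char \<chi> \<Longrightarrow> chi_of s v (char_to_torus s v \<chi>) = \<chi>"
  by (rule ext) (simp add: chi_of_def char_to_torus_def char_expand[symmetric])

lemma bij_chars: "bij_betw (char_to_torus s v) {\<chi>::'l \<Rightarrow> 'k::field. is_char \<chi>} (torus s)"
  unfolding bij_betw_def
proof
  show "inj_on (char_to_torus s v) {\<chi>::'l \<Rightarrow> 'k::field. is_char \<chi>}"
    by (rule inj_onI) (metis chi_of_ctt mem_Collect_eq)
  show "char_to_torus s v ` {\<chi>::'l \<Rightarrow> 'k. is_char \<chi>} = torus s"
  proof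
    show "char_to_torus s v ` {\<chi>::'l \<Rightarrow> 'k. is_char \<chi>} \<subseteq> torus s" using ctt_torus by auto
    show "torus s \<subseteq> char_to_torus s v ` {\<chi>::'l \<Rightarrow> 'k. is_char \<chi>}"
      using ctt_chi_of chi_of_char by (metis (mono_tags, lifting) image_eqI mem_Collect_eq subsetI)
  qed
qed

lemma char_neg_expand: "is_char \<chi> \<Longrightarrow> \<chi> (- y) = (\<Prod>i<s. char_to_torus s v \<chi> i powi (- coords s v y i))"
  by (simp add: char_expand[of \<chi> "- y"] coords_neg char_to_torus_def)

lemma conv_char:
  assumes c: "is_char \<chi>"
  shows "conv \<chi> a g = \<chi> g * symbol_eval s v a (char_to_torus s v \<chi>)"
proof -
  have "conv \<chi> a g = (\<Sum>y\<in>{y. a y \<noteq> 0}. \<chi> g * (a y * \<chi> (- y)))"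
    unfolding conv_reindex by (intro sum.cong) (auto simp: char_add[OF c, symmetric])
  also have "\<dots> = \<chi> g * symbol_eval s v a (char_to_torus s v \<chi>)"
    unfolding symbol_eval_def sum_distrib_left by (simp add: char_neg_expand[OF c])
  finally show ?thesis .
qed

lemma harmonic_iff:
  assumes c: "is_char \<chi>"
  shows "harmonic as \<chi> \<longleftrightarrow> (\<forall>a\<in>set as. symbol_eval s v a (char_to_torus s v \<chi>) = 0)"
  unfolding harmonic_def fun_eq_iff using conv_char[OF c] char_nz[OF c] by auto

lemma bij_harm: "bij_betw (char_to_torus s v) {\<chi>::'l \<Rightarrow> 'k::field. is_char \<chi> \<and> harmonic as \<chi>} (Sigma_set s v as)"
proof -
  have "bij_betw (char_to_torus s v) {\<chi>::'l \<Rightarrow> 'k::field. is_char \<chi> \<and> harmonic as \<chi>}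
     (char_to_torus s v ` {\<chi>::'l \<Rightarrow> 'k::field. is_char \<chi> \<and> harmonic as \<chi>})"
    by (rule bij_betw_subset[OF bij_chars]) auto
  moreover have "char_to_torus s v ` {\<chi>::'l \<Rightarrow> 'k::field. is_char \<chi> \<and> harmonic as \<chi>} = Sigma_set s v as"
  proof
    show "char_to_torus s v ` {\<chi>::'l \<Rightarrow> 'k::field. is_char \<chi> \<and> harmonic as \<chi>} \<subseteq> Sigma_set s v as"
      using harmonic_iff ctt_torus by (auto simp: Sigma_set_def)
    show "Sigma_set s v as \<subseteq> char_to_torus s v ` {\<chi>::'l \<Rightarrow> 'k::field. is_char \<chi> \<and> harmonic as \<chi>}"
    proof
      fix \<xi> :: "nat \<Rightarrow> 'k" assume x: "\<xi> \<in> Sigma_set s v as"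
      then have t: "\<xi> \<in> torus s" by (simp add: Sigma_set_def)
      show "\<xi> \<in> char_to_torus s v ` {\<chi>::'l \<Rightarrow> 'k::field. is_char \<chi> \<and> harmonic as \<chi>}"
        using x chi_of_char[OF t] ctt_chi_of[OF t] harmonic_iff[OF chi_of_char[OF t]]
        by (auto simp: Sigma_set_def intro!: image_eqI[of _ _ "chi_of s v \<xi>"])
    qed
  qed
  ultimately show ?thesis by simp
qed

lemma char_sublat:
  assumes c: "is_char \<chi>"
  shows "\<chi> (\<Sum>i<s. zsmul (k i * int (n i)) (v i)) = (\<Prod>i<s. (\<chi> (v i) ^ n i) powi k i)"
  by (simp add: char_sum[OF c] char_zsmul[OF c] power_int_mult mult.commute[of "k _"])

lemma periodic_char:
  assumes c: "is_char \<chi>"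
  shows "periodic (sublat s v n) \<chi> \<longleftrightarrow> char_to_torus s v \<chi> \<in> mu_set s n"
proof
  assume p: "periodic (sublat s v n) \<chi>"
  have "\<chi> (v i) ^ n i = 1" if i: "i < s" for i
  proof -
    let ?k = "\<lambda>j. if j = i then 1 else (0::int)"
    have "(\<Sum>j<s. zsmul (?k j * int (n j)) (v j)) \<in> sublat s v n"
      unfolding sublat_def by (intro CollectI exI[of _ ?k]) (rule refl)
    with p have "\<chi> (0 + (\<Sum>j<s. zsmul (?k j * int (n j)) (v j))) = \<chi> 0"
      unfolding periodic_def by blast
    then have "(\<Prod>j<s. (\<chi> (v j) ^ n j) powi ?k j) = 1"
      by (simp add: char_sublat[OF c] char_0[OF c] del: power_int_of_nat)
    also have "(\<Prod>j<s. (\<chi> (v j) ^ n j) powi ?k j) = (\<Prod>j<s. if j = i then \<chi> (v j) ^ n j else 1)"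
      by (intro prod.cong) auto
    finally show ?thesis using i by (simp add: prod.delta)
  qed
  then show "char_to_torus s v \<chi> \<in> mu_set s n" by (simp add: mu_set_def char_to_torus_def)
next
  assume m: "char_to_torus s v \<chi> \<in> mu_set s n"
  show "periodic (sublat s v n) \<chi>"
    unfolding periodic_def
  proof (intro allI impI)
    fix x y assume "y \<in> sublat s v n"
    then obtain k where y: "y = (\<Sum>i<s. zsmul (k i * int (n i)) (v i))" unfolding sublat_def by blast
    have "\<chi> y = 1" unfolding y char_sublat[OF c]
      using m by (intro prod.neutral) (simp add: mu_set_def char_to_torus_def)
    then show "\<chi> (x + y) = \<chi> x" by (simp add: char_add[OF c])
  qed
qed

lemma coset_rep:
  assumes n: "\<forall>i<s. 0 < n i"
  shows "coset (sublat s v n) x \<in> (\<lambda>r. coset (sublat s v n) (\<Sum>i<s. zsmul (int (r i)) (v i))) ` (PiE {..<s} (\<lambda>i. {..<n i}))"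
proof -
  let ?L = "sublat s v n"
  define \<alpha> where "\<alpha> = coords s v x"
  define r where "r = (\<lambda>i\<in>{..<s}. nat (\<alpha> i mod int (n i)))"
  have r: "r \<in> PiE {..<s} (\<lambda>i. {..<n i})"
    using n unfolding r_def by (auto simp: nat_less_iff)
  have ri: "int (r i) = \<alpha> i mod int (n i)" if "i < s" for i
    using that n unfolding r_def by simp
  have "x - (\<Sum>i<s. zsmul (int (r i)) (v i)) = (\<Sum>i<s. zsmul ((\<alpha> i div int (n i)) * int (n i)) (v i))"
  proof -
    have "x = (\<Sum>i<s. zsmul (\<alpha> i) (v i))" using coords_spec[of x] unfolding \<alpha>_def by simp
    then have "x - (\<Sum>i<s. zsmul (int (r i)) (v i)) = (\<Sum>i<s. zsmul (\<alpha> i - int (r i)) (v i))"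
      by (simp add: sum_subtractf[symmetric] zsmul_diff)
    also have "\<dots> = (\<Sum>i<s. zsmul ((\<alpha> i div int (n i)) * int (n i)) (v i))"
      by (intro sum.cong refl) (simp add: ri minus_mod_eq_div_mult)
    finally show ?thesis .
  qed
  then have "x - (\<Sum>i<s. zsmul (int (r i)) (v i)) \<in> ?L" unfolding sublat_def
    by (auto intro!: exI[where x="\<lambda>i. \<alpha> i div int (n i)"])
  then have "coset ?L x = coset ?L (\<Sum>i<s. zsmul (int (r i)) (v i))"
    by (simp add: coset_eq[OF subgrp_sublat])
  with r show ?thesis by blast
qed

lemma quot_finite_card:
  assumes n: "\<forall>i<s. 0 < n i"
  shows "finite (quot (sublat s v n)) \<and> card (quot (sublat s v n)) \<le> (\<Prod>i<s. n i)"
proof -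
  let ?R = "PiE {..<s} (\<lambda>i. {..<n i})"
  let ?f = "\<lambda>r. coset (sublat s v n) (\<Sum>i<s. zsmul (int (r i)) (v i))"
  have sub: "quot (sublat s v n) \<subseteq> ?f ` ?R" unfolding quot_def using coset_rep[OF n] by blast
  have fR: "finite ?R" by (simp add: finite_PiE)
  have "card (quot (sublat s v n)) \<le> card (?f ` ?R)" using sub fR by (simp add: card_mono)
  also have "\<dots> \<le> card ?R" using fR card_image_le by blast
  also have "\<dots> = (\<Prod>i<s. n i)" by (simp add: card_PiE)
  finally show ?thesis using sub fR finite_subset by blast
qed

lemma HG_char:
  fixes \<psi> :: "'l set \<Rightarrow> 'k::field"
  assumes n: "\<forall>i<s. 0 < n i" and fin: "\<forall>a\<in>set as. fin_supp a"
    and h: "\<psi> \<in> harmonic_charsG (sublat s v n) (map (pushfwd (sublat s v n)) as)"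
  shows "is_char (\<lambda>x. \<psi> (coset (sublat s v n) x)) \<and> periodic (sublat s v n) (\<lambda>x. \<psi> (coset (sublat s v n) x))
     \<and> harmonic as (\<lambda>x. \<psi> (coset (sublat s v n) x))"
proof -
  let ?L = "sublat s v n"
  note sg = subgrp_sublat[of s v n]
  have fq: "finite (quot ?L)" using quot_finite_card[OF n] by blast
  have c: "is_charG ?L \<psi>" using h by (simp add: harmonic_charsG_def)
  have "is_char (\<lambda>x. \<psi> (coset ?L x))"
    using c unfolding is_char_def is_charG_def by (auto simp: quot_def cadd_coset[OF sg, symmetric])
  moreover have "periodic ?L (\<lambda>x. \<psi> (coset ?L x))"
    unfolding periodic_def by (metis add_diff_cancel_left' coset_eq[OF sg])
  moreover have "harmonic as (\<lambda>x. \<psi> (coset ?L x))"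
    unfolding harmonic_def
  proof
    fix a assume a: "a \<in> set as"
    show "conv (\<lambda>x. \<psi> (coset ?L x)) a = 0"
    proof
      fix g
      have "conv (\<lambda>x. \<psi> (coset ?L x)) a g = convG ?L \<psi> (pushfwd ?L a) (coset ?L g)"
        using conv_pushfwd[OF sg fq] fin a by blast
      also have "\<dots> = 0" using h a by (auto simp: harmonic_charsG_def quot_def)
      finally show "conv (\<lambda>x. \<psi> (coset ?L x)) a g = 0 g" by simp
    qed
  qed
  ultimately show ?thesis by blast
qed

lemma bij_HG_SM:
  assumes n: "\<forall>i<s. 0 < n i" and fin: "\<forall>a\<in>set as. fin_supp a"
  shows "bij_betw (\<lambda>\<psi>. char_to_torus s v (\<lambda>x. \<psi> (coset (sublat s v n) x)))
     (harmonic_charsG (sublat s v n) (map (pushfwd (sublat s v n)) as)) (Sigma_set s v as \<inter> mu_set s n)"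
  (is "bij_betw ?\<Phi> ?HG ?SM")
  unfolding bij_betw_def
proof (intro conjI)
  let ?L = "sublat s v n"
  note sg = subgrp_sublat[of s v n]
  have fq: "finite (quot ?L)" using quot_finite_card[OF n] by blast
  show "inj_on ?\<Phi> ?HG"
  proof (rule inj_onI)
    fix \<psi>1 \<psi>2 assume h1: "\<psi>1 \<in> ?HG" and h2: "\<psi>2 \<in> ?HG" and e: "?\<Phi> \<psi>1 = ?\<Phi> \<psi>2"
    have "(\<lambda>x. \<psi>1 (coset ?L x)) = (\<lambda>x. \<psi>2 (coset ?L x))"
      using chi_of_ctt HG_char[OF n fin h1] HG_char[OF n fin h2] e by metis
    then have "\<And>c. c \<in> quot ?L \<Longrightarrow> \<psi>1 c = \<psi>2 c" by (auto simp: quot_def fun_eq_iff)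
    moreover have "\<psi>1 \<in> extensional (quot ?L)" "\<psi>2 \<in> extensional (quot ?L)"
      using h1 h2 by (auto simp: harmonic_charsG_def is_charG_def)
    ultimately show "\<psi>1 = \<psi>2" by (rule extensionalityI[rotated 2]) 
  qed
  show "?\<Phi> ` ?HG = ?SM"
  proof
    show "?\<Phi> ` ?HG \<subseteq> ?SM"
    proof
      fix \<xi> assume "\<xi> \<in> ?\<Phi> ` ?HG"
      then obtain \<psi> where h: "\<psi> \<in> ?HG" and x: "\<xi> = ?\<Phi> \<psi>" by blast
      note hc = HG_char[OF n fin h]
      show "\<xi> \<in> ?SM" unfolding x using hc harmonic_iff[of "\<lambda>x. \<psi> (coset ?L x)" as]
          periodic_char[of "\<lambda>x. \<psi> (coset ?L x)" n] ctt_torus[of "\<lambda>x. \<psi> (coset ?L x)"]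
        by (auto simp: Sigma_set_def)
    qed
    show "?SM \<subseteq> ?\<Phi> ` ?HG"
    proof
      fix \<xi> :: "nat \<Rightarrow> 'a" assume x: "\<xi> \<in> ?SM"
      then have t: "\<xi> \<in> torus s" by (simp add: Sigma_set_def)
      define \<chi> where "\<chi> = chi_of s v \<xi>"
      have c: "is_char \<chi>" unfolding \<chi>_def by (rule chi_of_char[OF t])
      have e: "char_to_torus s v \<chi> = \<xi>" unfolding \<chi>_def by (rule ctt_chi_of[OF t])
      have hm: "harmonic as \<chi>" using harmonic_iff[OF c] e x by (simp add: Sigma_set_def)
      have pr: "periodic ?L \<chi>" using periodic_char[OF c] e x by simp
      define \<psi> where "\<psi> = (\<lambda>c\<in>quot ?L. \<chi> (SOME x. x \<in> c))"
      have pc: "\<psi> (coset ?L x) = \<chi> x" for x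
      proof -
        have "(SOME y. y \<in> coset ?L x) \<in> coset ?L x" using mem_coset_self[OF sg] by (rule someI)
        then have "(SOME y. y \<in> coset ?L x) - x \<in> ?L" by (simp add: coset_def)
        then have "\<chi> (x + ((SOME y. y \<in> coset ?L x) - x)) = \<chi> x" using pr unfolding periodic_def by blast
        then show ?thesis by (simp add: \<psi>_def quot_def)
      qed
      have pc': "(\<lambda>x. \<psi> (coset ?L x)) = \<chi>" using pc by auto
      have cG: "is_charG ?L \<psi>"
        unfolding is_charG_def
      proof (intro conjI ballI)
        show "\<psi> \<in> extensional (quot ?L)" by (simp add: \<psi>_def)
        fix c d assume "c \<in> quot ?L" "d \<in> quot ?L"
        then obtain x y where "c = coset ?L x" "d = coset ?L y" by (auto simp: quot_def)
        then show "\<psi> (cadd c d) = \<psi> c * \<psi> d"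
          by (simp add: cadd_coset[OF sg] pc char_add[OF c])
      next
        fix c assume "c \<in> quot ?L"
        then obtain x where "c = coset ?L x" by (auto simp: quot_def)
        then show "\<psi> c \<noteq> 0" by (simp add: pc char_nz[OF c])
      qed
      have "\<psi> \<in> ?HG"
        unfolding harmonic_charsG_def
      proof (intro CollectI conjI cG ballI)
        fix b c assume b: "b \<in> set (map (pushfwd ?L) as)" and cq: "c \<in> quot ?L"
        then obtain a where a: "a \<in> set as" "b = pushfwd ?L a" by auto
        obtain g where g: "c = coset ?L g" using cq by (auto simp: quot_def)
        have "convG ?L \<psi> b c = conv (\<lambda>x. \<psi> (coset ?L x)) a g"
          using conv_pushfwd[OF sg fq, of a \<psi> g] fin a g by simp
        also have "\<dots> = 0" using hm a unfolding pc' harmonic_def by simp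
        finally show "convG ?L \<psi> b c = 0" .
      qed
      moreover have "?\<Phi> \<psi> = \<xi>" using pc' e by simp
      ultimately show "\<xi> \<in> ?\<Phi> ` ?HG" by blast
    qed
  qed
qed

lemma bij_restrict:
  assumes T: "T \<subseteq> torus s" and Q: "\<forall>\<chi>::'l \<Rightarrow> 'k::field. is_char \<chi> \<longrightarrow> (Q \<chi> \<longleftrightarrow> char_to_torus s v \<chi> \<in> T)"
  shows "bij_betw (char_to_torus s v) {\<chi>::'l \<Rightarrow> 'k. is_char \<chi> \<and> Q \<chi>} T"
proof -
  have "bij_betw (char_to_torus s v) {\<chi>::'l \<Rightarrow> 'k. is_char \<chi> \<and> Q \<chi>}
     (char_to_torus s v ` {\<chi>::'l \<Rightarrow> 'k. is_char \<chi> \<and> Q \<chi>})"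
    by (rule bij_betw_subset[OF bij_chars]) auto
  moreover have "char_to_torus s v ` {\<chi>::'l \<Rightarrow> 'k. is_char \<chi> \<and> Q \<chi>} = T"
  proof
    show "char_to_torus s v ` {\<chi>::'l \<Rightarrow> 'k. is_char \<chi> \<and> Q \<chi>} \<subseteq> T" using Q by auto
    show "T \<subseteq> char_to_torus s v ` {\<chi>::'l \<Rightarrow> 'k. is_char \<chi> \<and> Q \<chi>}"
    proof
      fix \<xi> :: "nat \<Rightarrow> 'k" assume x: "\<xi> \<in> T"
      then have t: "\<xi> \<in> torus s" using T by blast
      show "\<xi> \<in> char_to_torus s v ` {\<chi>::'l \<Rightarrow> 'k. is_char \<chi> \<and> Q \<chi>}"
        using x Q chi_of_char[OF t] ctt_chi_of[OF t]
        by (intro image_eqI[of _ _ "chi_of s v \<xi>"]) auto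
    qed
  qed
  ultimately show ?thesis by simp
qed

lemma mu_torus: "\<forall>i<s. 0 < n i \<Longrightarrow> mu_set s n \<subseteq> torus s"
  by (auto simp: mu_set_def torus_def) (metis power_0_left zero_neq_one not_gr0)

lemma d_dim_eq:
  assumes n: "\<forall>i<s. 0 < n i" and un: "\<forall>i<s. card {z::'k::field. z ^ n i = 1} = n i"
  shows "d_dim (as :: ('l \<Rightarrow> 'k) list) (sublat s v n) = card (Sigma_set s v as \<inter> mu_set s n)"
proof -
  interpret FV: vector_space "\<lambda>(c::'k) (f::'l \<Rightarrow> 'k) x. c * f x" by (rule fv)
  let ?L = "sublat s v n"
  note sg = subgrp_sublat[of s v n]
  define W where "W = {f::'l \<Rightarrow> 'k. periodic ?L f \<and> (\<forall>a\<in>set as. conv f a = 0)}"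
  define P where "P = {\<chi>::'l \<Rightarrow> 'k. is_char \<chi> \<and> periodic ?L \<chi>}"
  define B where "B = {\<chi>::'l \<Rightarrow> 'k. is_char \<chi> \<and> (harmonic as \<chi> \<and> periodic ?L \<chi>)}"
  have bP: "bij_betw (char_to_torus s v) P (mu_set s n)"
    unfolding P_def by (rule bij_restrict[OF mu_torus[OF n]]) (simp add: periodic_char)
  have bB: "bij_betw (char_to_torus s v) B (Sigma_set s v as \<inter> mu_set s n)"
    unfolding B_def
  proof (rule bij_restrict)
    show "Sigma_set s v as \<inter> mu_set s n \<subseteq> torus s" by (auto simp: Sigma_set_def)
    show "\<forall>\<chi>::'l \<Rightarrow> 'k. is_char \<chi> \<longrightarrow> (harmonic as \<chi> \<and> periodic ?L \<chi> \<longleftrightarrow> char_to_torus s v \<chi> \<in> Sigma_set s v as \<inter> mu_set s n)"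
      by (simp add: periodic_char harmonic_iff ctt_torus Sigma_set_def)
  qed
  have cP: "card P = (\<Prod>i<s. n i)" using bij_betw_same_card[OF bP] card_mu[OF un] by simp
  have "0 < card P" unfolding cP using n by (simp add: prod_pos)
  then have fP: "finite P" by (rule card_ge_0_finite)
  have "P \<subseteq> {\<chi>. is_char \<chi>}" by (auto simp: P_def)
  then have iP: "FV.independent P" by (rule FV.independent_mono[OF chars_indep])
  have BP: "B \<subseteq> P" by (auto simp: B_def P_def)
  have iB: "FV.independent B" using FV.independent_mono[OF iP BP] .
  define Ind where "Ind = (\<lambda>c. (\<lambda>x. if x \<in> c then 1 else 0 :: 'k)) ` quot ?L"
  have fq: "finite (quot ?L)" and cq: "card (quot ?L) \<le> (\<Prod>i<s. n i)" using quot_finite_card[OF n] by auto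
  have fI: "finite Ind" unfolding Ind_def using fq by (rule finite_imageI)
  have "card Ind \<le> card (quot ?L)" unfolding Ind_def by (rule card_image_le[OF fq])
  then have cI: "card Ind \<le> card P" using cq cP by linarith
  have W0: "f \<in> FV.span Ind" if f: "periodic ?L f" for f
  proof -
    have "f = (\<Sum>c\<in>quot ?L. (\<lambda>x. f (SOME y. y \<in> c) * (if x \<in> c then 1 else 0)))"
    proof
      fix x
      have "(\<Sum>c\<in>quot ?L. (\<lambda>x. f (SOME y. y \<in> c) * (if x \<in> c then 1 else 0))) x
          = (\<Sum>c\<in>quot ?L. if c = coset ?L x then f (SOME y. y \<in> c) else 0)"
        unfolding sum_fun_apply
        by (intro sum.cong refl) (auto simp: quot_def coset_mem_eq[OF sg] mem_coset_self[OF sg])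
      also have "\<dots> = f (SOME y. y \<in> coset ?L x)" using fq by (simp add: quot_def)
      also have "\<dots> = f x"
      proof -
        have "(SOME y. y \<in> coset ?L x) \<in> coset ?L x" using mem_coset_self[OF sg] by (rule someI)
        then have "(SOME y. y \<in> coset ?L x) - x \<in> ?L" by (simp add: coset_def)
        then have "f (x + ((SOME y. y \<in> coset ?L x) - x)) = f x" using f unfolding periodic_def by blast
        then show ?thesis by simp
      qed
      finally show "f x = (\<Sum>c\<in>quot ?L. (\<lambda>x. f (SOME y. y \<in> c) * (if x \<in> c then 1 else 0))) x" by simp
    qed
    also have "\<dots> \<in> FV.span Ind"
      by (intro FV.span_sum FV.span_scale FV.span_base) (auto simp: Ind_def)
    finally show ?thesis .
  qed
  have SP: "f \<in> FV.span P" if f: "periodic ?L f" for f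
  proof (rule ccontr)
    assume nf: "f \<notin> FV.span P"
    have "FV.independent (insert f P)" using FV.independent_insertI[OF nf iP] .
    moreover have "insert f P \<subseteq> FV.span Ind" using W0 f by (auto simp: P_def)
    ultimately have "card (insert f P) \<le> card Ind" using FV.independent_span_bound[OF fI] by blast
    moreover have "f \<notin> P" using nf FV.span_base by blast
    ultimately show False using cI fP by simp
  qed
  have WB: "W \<subseteq> FV.span B"
  proof
    fix f assume fW: "f \<in> W"
    then obtain u where fu: "f = (\<Sum>\<chi>\<in>P. (\<lambda>x. u \<chi> * \<chi> x))"
      using SP[of f] FV.span_finite[OF fP] by (auto simp: W_def)
    have fx: "f = (\<lambda>x. \<Sum>\<chi>\<in>P. u \<chi> * \<chi> x)" using fu by (simp add: fun_eq_iff sum_fun_apply)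
    have uz: "u \<chi> = 0" if "\<chi> \<in> P" "\<chi> \<notin> B" for \<chi>
    proof -
      have c: "is_char \<chi>" using that by (simp add: P_def)
      have "\<not> harmonic as \<chi>" using that by (auto simp: P_def B_def)
      then obtain a where a: "a \<in> set as" "symbol_eval s v a (char_to_torus s v \<chi>) \<noteq> 0"
        using harmonic_iff[OF c] by blast
      have "\<forall>g. (\<Sum>\<chi>\<in>P. (u \<chi> * symbol_eval s v a (char_to_torus s v \<chi>)) * \<chi> g) = 0"
      proof
        fix g
        have "0 = conv f a g" using fW a by (simp add: W_def)
        also have "\<dots> = (\<Sum>\<chi>\<in>P. u \<chi> * conv \<chi> a g)" unfolding fx by (rule conv_lin)
        also have "\<dots> = (\<Sum>\<chi>\<in>P. (u \<chi> * symbol_eval s v a (char_to_torus s v \<chi>)) * \<chi> g)"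
          by (intro sum.cong refl) (simp add: conv_char P_def)
        finally show "(\<Sum>\<chi>\<in>P. (u \<chi> * symbol_eval s v a (char_to_torus s v \<chi>)) * \<chi> g) = 0" by simp
      qed
      then have "u \<chi> * symbol_eval s v a (char_to_torus s v \<chi>) = 0"
        using dedekind[OF fP, of "\<lambda>\<chi>. u \<chi> * symbol_eval s v a (char_to_torus s v \<chi>)"] that
        by (auto simp: P_def)
      then show ?thesis using a by simp
    qed
    have "f = (\<Sum>\<chi>\<in>B. (\<lambda>x. u \<chi> * \<chi> x))"
      unfolding fu using fP BP uz by (intro sum.mono_neutral_right) (auto simp: fun_eq_iff)
    also have "\<dots> \<in> FV.span B" by (intro FV.span_sum FV.span_scale FV.span_base)
    finally show "f \<in> FV.span B" .
  qed
  have BW: "B \<subseteq> W" by (auto simp: B_def W_def harmonic_def)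
  have "FV.dim W = card (Sigma_set s v as \<inter> mu_set s n)"
    using FV.dim_unique[OF BW WB iB] bij_betw_same_card[OF bB] by simp
  then show ?thesis unfolding d_dim_def W_def .
qed
end


theorem proposition3p1:
  fixes p :: nat and s :: nat
    and v :: "nat \<Rightarrow> 'l::ab_group_add"
    and as :: "('l \<Rightarrow> 'k::field) list"
  assumes K: "alg_closure_of_Fp p TYPE('k)"
    and basis: "is_lattice_basis s v"
    and fin: "\<forall>a\<in>set as. fin_supp a"
  shows "bij_betw (char_to_torus s v) {\<chi>::'l \<Rightarrow> 'k. is_char \<chi>} (torus s)
       \<and> bij_betw (char_to_torus s v) {\<chi>. is_char \<chi> \<and> harmonic as \<chi>} (Sigma_set s v as)
       \<and> (\<forall>n::nat \<Rightarrow> nat. (\<forall>i<s. 0 < n i \<and> coprime (n i) p) \<longrightarrow>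
            (let L = sublat s v n; bs = map (pushfwd L) as in
              (\<exists>f. bij_betw f (Sigma_set s v as \<inter> mu_set s n) (harmonic_charsG L bs))
            \<and> (\<exists>g. bij_betw g (harmonic_charsG L bs) (V_set L bs))
            \<and> d_dim as L = card (V_set L bs)
            \<and> card (V_set L bs) = card (Sigma_set s v as \<inter> mu_set s n)))"
proof (intro conjI allI impI)
  have pp: "prime p" and ch: "CHAR('k) = p"
    and ac: "\<forall>q::'k poly. degree q > 0 \<longrightarrow> (\<exists>x. poly q x = 0)"
    using K by (auto simp: alg_closure_of_Fp_def)
  show "bij_betw (char_to_torus s v) {\<chi>::'l \<Rightarrow> 'k. is_char \<chi>} (torus s)"
    by (rule bij_chars[OF basis])
  show "bij_betw (char_to_torus s v) {\<chi>::'l \<Rightarrow> 'k. is_char \<chi> \<and> harmonic as \<chi>} (Sigma_set s v as)"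
    by (rule bij_harm[OF basis])
  fix n :: "nat \<Rightarrow> nat"
  assume nc: "\<forall>i<s. 0 < n i \<and> coprime (n i) p"
  have n: "\<forall>i<s. 0 < n i" using nc by blast
  have un: "\<forall>i<s. card {z::'k. z ^ n i = 1} = n i"
  proof (intro allI impI)
    fix i assume i: "i < s"
    have "of_nat (n i) \<noteq> (0::'k)"
    proof
      assume "of_nat (n i) = (0::'k)"
      then have "p dvd n i" using ch by (simp add: of_nat_eq_0_iff_char_dvd)
      moreover have "coprime (n i) p" using nc i by blast
      ultimately show False using pp by (metis coprime_common_divisor dvd_refl not_prime_unit)
    qed
    then show "card {z::'k. z ^ n i = 1} = n i" using unity_card[OF ac] n i by blast
  qed
  let ?L = "sublat s v n"
  let ?bs = "map (pushfwd ?L) as"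
  have b1: "bij_betw (\<lambda>\<psi>. char_to_torus s v (\<lambda>x. \<psi> (coset ?L x))) (harmonic_charsG ?L ?bs) (Sigma_set s v as \<inter> mu_set s n)"
    by (rule bij_HG_SM[OF basis n fin])
  have b2: "bij_betw (invG ?L) (harmonic_charsG ?L ?bs) (V_set ?L ?bs)"
    by (rule bij_HG_V[OF subgrp_sublat])
  have c1: "card (V_set ?L ?bs) = card (Sigma_set s v as \<inter> mu_set s n)"
    using bij_betw_same_card[OF b1] bij_betw_same_card[OF b2] by simp
  have d: "d_dim as ?L = card (Sigma_set s v as \<inter> mu_set s n)"
    by (rule d_dim_eq[OF basis n un])
  show "let L = ?L; bs = map (pushfwd L) as in
              (\<exists>f. bij_betw f (Sigma_set s v as \<inter> mu_set s n) (harmonic_charsG L bs))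
            \<and> (\<exists>g. bij_betw g (harmonic_charsG L bs) (V_set L bs))
            \<and> d_dim as L = card (V_set L bs)
            \<and> card (V_set L bs) = card (Sigma_set s v as \<inter> mu_set s n)"
    unfolding Let_def using bij_betw_inv_into[OF b1] b2 c1 d by auto
qed

end
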